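(* Let $J=\{i_1,\dots,i_n\}\subset\mathbb N_+$ be finite with $n\ge1$. If $n=2t+1$, then $M_J$ is stably isomorphic as a $\Lambda(Q_1,P)$-module to a direct sum of $2^t$ copies of $\Lambda(Q_1)=\Lambda(Q_1,P)/(P)$. If $n=2t$, then $M_J$ is stably isomorphic to a direct sum of $2^{t-1}$ copies of $M_{[2]}$.
   Context: Over $\mathbb F_2$, $\Lambda(Q_1,P)$ is the exterior algebra on $Q_1,P$, a Hopf algebra with $Q_1$ primitive and $\Delta(P)=P\otimes1+Q_1\otimes Q_1+1\otimes P$. For $i\in\mathbb N_+$, $M_i$ has basis $t_i,x_i$ with $Q_1(x_i)=t_i$, $Q_1(t_i)=0$, $P=0$; for finite $J\subset\mathbb N_+$, $M_J=\bigotimes_{j\in J}M_j$ with the action through the coproduct; $[2]=\{1,2\}$. Two modules $M,N$ are stably isomorphic if $F\oplus M\cong F'\oplus N$ for free $\Lambda(Q_1,P)$-modules $F,F'$. *)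

theory Defs
  imports "HOL-Library.Z2" "Jordan_Normal_Form.Matrix"
begin

text \<open>A finite-dimensional module over Lambda(Q1,P) over F2 (type bit) is represented by
  the pair of square matrices (q, p) of the same size describing the actions of Q1 and P
  (with respect to a chosen basis).\<close>

type_synonym lmod = "bit mat \<times> bit mat"

definition ldim :: "lmod \<Rightarrow> nat" where
  "ldim M = dim_row (fst M)"

definition lmod_iso :: "lmod \<Rightarrow> lmod \<Rightarrow> bool" where
  "lmod_iso M N \<longleftrightarrow> ldim M = ldim N \<and>
     (\<exists>S. S \<in> carrier_mat (ldim N) (ldim M) \<and> invertible_mat S \<and>
          S * fst M = fst N * S \<and> S * snd M = snd N * S)"

definition mat_dsum :: "bit mat \<Rightarrow> bit mat \<Rightarrow> bit mat" where
  "mat_dsum A B = four_block_mat A (0\<^sub>m (dim_row A) (dim_col B))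
                                   (0\<^sub>m (dim_row B) (dim_col A)) B"

definition lmod_sum :: "lmod \<Rightarrow> lmod \<Rightarrow> lmod" where
  "lmod_sum M N = (mat_dsum (fst M) (fst N), mat_dsum (snd M) (snd N))"

definition lmod_zero :: lmod where
  "lmod_zero = (0\<^sub>m 0 0, 0\<^sub>m 0 0)"

primrec lmod_copies :: "nat \<Rightarrow> lmod \<Rightarrow> lmod" where
  "lmod_copies 0 M = lmod_zero"
| "lmod_copies (Suc k) M = lmod_sum M (lmod_copies k M)"

text \<open>Kronecker product of matrices, and tensor product of modules with the action through
  the coproduct: Q1 primitive, Delta(P) = P\<otimes>1 + Q1\<otimes>Q1 + 1\<otimes>P.\<close>
definition kron :: "bit mat \<Rightarrow> bit mat \<Rightarrow> bit mat" where
  "kron A B = mat (dim_row A * dim_row B) (dim_col A * dim_col B)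
     (\<lambda>(i, j). A $$ (i div dim_row B, j div dim_col B) * B $$ (i mod dim_row B, j mod dim_col B))"

definition lmod_tensor :: "lmod \<Rightarrow> lmod \<Rightarrow> lmod" where
  "lmod_tensor M N =
    (let m = ldim M; n = ldim N in
     (kron (fst M) (1\<^sub>m n) + kron (1\<^sub>m m) (fst N),
      kron (snd M) (1\<^sub>m n) + kron (fst M) (fst N) + kron (1\<^sub>m m) (snd N)))"

definition lmod_unit :: lmod where
  "lmod_unit = (0\<^sub>m 1 1, 0\<^sub>m 1 1)"

text \<open>The free module Lambda(Q1,P) of rank one, basis 1, Q1, P, Q1P (indices 0,1,2,3).\<close>
definition Lam :: lmod where
  "Lam = (mat 4 4 (\<lambda>(i, j). if (i, j) = (1, 0) \<or> (i, j) = (3, 2) then 1 else 0),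
          mat 4 4 (\<lambda>(i, j). if (i, j) = (2, 0) \<or> (i, j) = (3, 1) then 1 else 0))"

text \<open>Lambda(Q1) = Lambda(Q1,P)/(P), basis 1, Q1 (indices 0,1), P acting by zero.\<close>
definition LamQ1 :: lmod where
  "LamQ1 = (mat 2 2 (\<lambda>(i, j). if (i, j) = (1, 0) then 1 else 0), 0\<^sub>m 2 2)"

text \<open>M_i: basis t_i, x_i (indices 0,1), Q1 x_i = t_i, Q1 t_i = 0, P = 0.
  (As an ungraded module, M_i does not depend on i.)\<close>
definition Mi :: "nat \<Rightarrow> lmod" where
  "Mi i = (mat 2 2 (\<lambda>(i, j). if (i, j) = (0, 1) then 1 else 0), 0\<^sub>m 2 2)"

definition MJ :: "nat set \<Rightarrow> lmod" where
  "MJ J = foldr (\<lambda>j N. lmod_tensor (Mi j) N) (sorted_list_of_set J) lmod_unit"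

definition free_lmod :: "nat \<Rightarrow> lmod" where
  "free_lmod r = lmod_copies r Lam"

definition stably_iso :: "lmod \<Rightarrow> lmod \<Rightarrow> bool" where
  "stably_iso M N \<longleftrightarrow> (\<exists>a b. lmod_iso (lmod_sum (free_lmod a) M) (lmod_sum (free_lmod b) N))"

end

theory Submission
  imports Defs
begin


lemma kron_dims[simp]: "dim_row (kron A B) = dim_row A * dim_row B" "dim_col (kron A B) = dim_col A * dim_col B"
  unfolding kron_def by (simp_all only: dim_row_mat dim_col_mat)
lemma kron_index[simp]: "i < dim_row A * dim_row B \<Longrightarrow> j < dim_col A * dim_col B \<Longrightarrow>
  kron A B $$ (i,j) = A $$ (i div dim_row B, j div dim_col B) * B $$ (i mod dim_row B, j mod dim_col B)"
  unfolding kron_def by (subst index_mat) auto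

lemma kron_carrier[simp]: assumes "A \<in> carrier_mat a a'" "B \<in> carrier_mat b b'" shows "kron A B \<in> carrier_mat (a*b) (a'*b')"
proof -
  have d: "dim_row A = a" "dim_col A = a'" "dim_row B = b" "dim_col B = b'" using assms by auto
  show ?thesis by (rule carrier_matI) (simp_all only: kron_dims d)
qed

lemma mult_index:
  assumes A: "A \<in> carrier_mat n m" and B: "B \<in> carrier_mat m k" and i: "i < n" and j: "j < k"
  shows "(A * B) $$ (i,j) = (\<Sum>l\<in>{0..<m}. A $$ (i,l) * B $$ (l,j))"
proof -
  have d: "dim_row A = n" "dim_col A = m" "dim_row B = m" "dim_col B = k" using A B by auto
  have "(A * B) $$ (i,j) = row A i \<bullet> col B j" using d i j by (simp only: index_mult_mat)
  also have "\<dots> = (\<Sum>l\<in>{0..<m}. row A i $ l * col B j $ l)" by (simp only: scalar_prod_def dim_col d)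
  also have "\<dots> = (\<Sum>l\<in>{0..<m}. A $$ (i,l) * B $$ (l,j))"
  proof (rule sum.cong[OF refl])
    fix l assume "l \<in> {0..<m}"
    then have l: "l < m" by simp
    show "row A i $ l * col B j $ l = A $$ (i,l) * B $$ (l,j)"
      using index_row(1)[of i A l] index_col[of l B j] i j l d by simp
  qed
  finally show ?thesis .
qed

lemma sum_split_prod: "(\<Sum>k\<in>{0..<a*b}. f k) = (\<Sum>k1\<in>{0..<a}. \<Sum>k2\<in>{0..<b}. f (k1*b+k2 :: nat))"
proof (induction a)
  case 0 then show ?case by simp
next
  case (Suc a)
  have "(\<Sum>k\<in>{0..<Suc a*b}. f k) = (\<Sum>k\<in>{0..<a*b}. f k) + (\<Sum>k\<in>{a*b..<a*b+b}. f k)"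
    by (simp add: add.commute sum.atLeastLessThan_concat)
  also have "(\<Sum>k\<in>{a*b..<a*b+b}. f k) = (\<Sum>k2\<in>{0..<b}. f (a*b+k2))"
    using sum.shift_bounds_nat_ivl[of f 0 "a*b" b] by (simp add: add.commute)
  finally show ?case using Suc by simp
qed

lemma kron_mult:
  assumes A: "A \<in> carrier_mat a a'" and B: "B \<in> carrier_mat b b'"
    and C: "C \<in> carrier_mat a' c" and D: "D \<in> carrier_mat b' d"
  shows "kron A B * kron C D = kron (A * C) (B * D)"
proof (rule eq_matI)
  have dA: "dim_row A = a" "dim_col A = a'" using A by auto
  have dB: "dim_row B = b" "dim_col B = b'" using B by auto
  have dC: "dim_row C = a'" "dim_col C = c" using C by auto
  have dD: "dim_row D = b'" "dim_col D = d" using D by auto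
  fix i j assume i: "i < dim_row (kron (A * C) (B * D))" and j: "j < dim_col (kron (A * C) (B * D))"
  from i have ia: "i < a * b" using A B by simp
  from j have jc: "j < c * d" using C D by simp
  have b0: "b > 0" using ia by (cases b) auto
  have d0: "d > 0" using jc by (cases d) auto
  have idb: "i div b < a" using ia by (simp add: less_mult_imp_div_less)
  have jdd: "j div d < c" using jc by (simp add: less_mult_imp_div_less)
  have imb: "i mod b < b" using b0 by simp
  have jmd: "j mod d < d" using d0 by simp
  have "(kron A B * kron C D) $$ (i,j) = (\<Sum>k\<in>{0..<a'*b'}. kron A B $$ (i,k) * kron C D $$ (k,j))"
    by (rule mult_index) (use A B C D ia jc in auto)
  also have "\<dots> = (\<Sum>k1\<in>{0..<a'}. \<Sum>k2\<in>{0..<b'}. kron A B $$ (i,k1*b'+k2) * kron C D $$ (k1*b'+k2,j))"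
    by (rule sum_split_prod)
  also have "\<dots> = (\<Sum>k1\<in>{0..<a'}. \<Sum>k2\<in>{0..<b'}. (A $$ (i div b, k1) * C $$ (k1, j div d)) * (B $$ (i mod b, k2) * D $$ (k2, j mod d)))"
  proof (rule sum.cong[OF refl], rule sum.cong[OF refl])
    fix k1 k2 assume k1: "k1 \<in> {0..<a'}" and k2: "k2 \<in> {0..<b'}"
    have kk: "k1*b'+k2 < a'*b'"
    proof -
      have "k1*b'+k2 < k1*b'+b'" using k2 by simp
      also have "\<dots> = Suc k1 * b'" by simp
      also have "\<dots> \<le> a'*b'" using k1 by (intro mult_le_mono1) simp
      finally show ?thesis .
    qed
    have dv: "(k1*b'+k2) div b' = k1" "(k1*b'+k2) mod b' = k2" using k2 by auto
    have e1: "kron A B $$ (i,k1*b'+k2) = A $$ (i div b, k1) * B $$ (i mod b, k2)"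
      using kron_index[of i A B "k1*b'+k2"] ia kk by (simp only: dA dB dv)
    have e2: "kron C D $$ (k1*b'+k2,j) = C $$ (k1, j div d) * D $$ (k2, j mod d)"
      using kron_index[of "k1*b'+k2" C D j] jc kk by (simp only: dC dD dv)
    show "kron A B $$ (i,k1*b'+k2) * kron C D $$ (k1*b'+k2,j) = (A $$ (i div b, k1) * C $$ (k1, j div d)) * (B $$ (i mod b, k2) * D $$ (k2, j mod d))"
      unfolding e1 e2 by (simp only: mult_ac)
  qed
  also have "\<dots> = (\<Sum>k1\<in>{0..<a'}. A $$ (i div b, k1) * C $$ (k1, j div d)) * (\<Sum>k2\<in>{0..<b'}. B $$ (i mod b, k2) * D $$ (k2, j mod d))"
    by (rule sum_product[symmetric])
  also have "\<dots> = (A*C) $$ (i div b, j div d) * (B*D) $$ (i mod b, j mod d)"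
    by (simp only: mult_index[OF A C idb jdd] mult_index[OF B D imb jmd])
  also have "\<dots> = kron (A * C) (B * D) $$ (i,j)"
  proof -
    have r: "dim_row (B*D) = b" "dim_col (B*D) = d" "dim_row (A*C) = a" "dim_col (A*C) = c"
      using A B C D by auto
    show ?thesis by (subst kron_index) (simp_all only: r ia jc)
  qed
  finally show "(kron A B * kron C D) $$ (i,j) = kron (A * C) (B * D) $$ (i,j)" .
next
  show "dim_row (kron A B * kron C D) = dim_row (kron (A * C) (B * D))" using A B C D by simp
  show "dim_col (kron A B * kron C D) = dim_col (kron (A * C) (B * D))" using A B C D by simp
qed


lemma kron_add_left:
  assumes A: "A \<in> carrier_mat a a'" and B: "B \<in> carrier_mat a a'" and C: "C \<in> carrier_mat c c'"
  shows "kron (A + B) C = kron A C + kron B C"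
proof (rule eq_matI)
  have d: "dim_row A = a" "dim_col A = a'" "dim_row B = a" "dim_col B = a'" "dim_row C = c" "dim_col C = c'"
    using A B C by auto
  have d2: "dim_row (A+B) = a" "dim_col (A+B) = a'" using A B by auto
  fix i j assume "i < dim_row (kron A C + kron B C)" "j < dim_col (kron A C + kron B C)"
  then have ij: "i < a*c" "j < a'*c'" by (simp_all add: d)
  have q: "i div c < a" "j div c' < a'" using ij by (simp_all add: less_mult_imp_div_less)
  have "kron (A + B) C $$ (i, j) = (A+B) $$ (i div c, j div c') * C $$ (i mod c, j mod c')"
    using kron_index[of i "A+B" C j] ij by (simp only: d d2)
  also have "\<dots> = A $$ (i div c, j div c') * C $$ (i mod c, j mod c') + B $$ (i div c, j div c') * C $$ (i mod c, j mod c')"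
    using index_add_mat(1)[of "i div c" B "j div c'" A] q by (simp only: d distrib_right)
  also have "\<dots> = (kron A C + kron B C) $$ (i, j)"
    using kron_index[of i A C j] kron_index[of i B C j] index_add_mat(1)[of i "kron B C" j "kron A C"] ij
    by (simp only: d kron_dims)
  finally show "kron (A + B) C $$ (i, j) = (kron A C + kron B C) $$ (i, j)" .
qed (use A B C in auto)

lemma kron_add_right:
  assumes A: "A \<in> carrier_mat a a'" and B: "B \<in> carrier_mat c c'" and C: "C \<in> carrier_mat c c'"
  shows "kron A (B + C) = kron A B + kron A C"
proof (rule eq_matI)
  have d: "dim_row A = a" "dim_col A = a'" "dim_row B = c" "dim_col B = c'" "dim_row C = c" "dim_col C = c'"
    using A B C by auto
  have d2: "dim_row (B+C) = c" "dim_col (B+C) = c'" using B C by auto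
  fix i j assume "i < dim_row (kron A B + kron A C)" "j < dim_col (kron A B + kron A C)"
  then have ij: "i < a*c" "j < a'*c'" by (simp_all add: d)
  have c0: "c > 0" "c' > 0" using ij by (auto intro: gr0I)
  have q: "i mod c < c" "j mod c' < c'" using c0 by auto
  have "kron A (B + C) $$ (i, j) = A $$ (i div c, j div c') * (B+C) $$ (i mod c, j mod c')"
    using kron_index[of i A "B+C" j] ij by (simp only: d d2)
  also have "\<dots> = A $$ (i div c, j div c') * B $$ (i mod c, j mod c') + A $$ (i div c, j div c') * C $$ (i mod c, j mod c')"
    using index_add_mat(1)[of "i mod c" C "j mod c'" B] q by (simp only: d distrib_left)
  also have "\<dots> = (kron A B + kron A C) $$ (i, j)"
    using kron_index[of i A B j] kron_index[of i A C j] index_add_mat(1)[of i "kron A C" j "kron A B"] ij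
    by (simp only: d kron_dims)
  finally show "kron A (B + C) $$ (i, j) = (kron A B + kron A C) $$ (i, j)" .
qed (use A B C in auto)

lemma kron_one: "kron (1\<^sub>m a) (1\<^sub>m b) = (1\<^sub>m (a*b) :: bit mat)"
proof (rule eq_matI)
  fix i j assume "i < dim_row (1\<^sub>m (a * b) :: bit mat)" "j < dim_col (1\<^sub>m (a * b) :: bit mat)"
  then have ij: "i < a*b" "j < a*b" by auto
  have b0: "b > 0" using ij by (auto intro: gr0I)
  have q: "i div b < a" "j div b < a" "i mod b < b" "j mod b < b" using ij b0 by (simp_all add: less_mult_imp_div_less)
  have e: "(i div b = j div b \<and> i mod b = j mod b) \<longleftrightarrow> i = j"
    by (metis div_mult_mod_eq)
  have "kron (1\<^sub>m a) (1\<^sub>m b) $$ (i, j) = (1\<^sub>m a :: bit mat) $$ (i div b, j div b) * (1\<^sub>m b :: bit mat) $$ (i mod b, j mod b)"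
    using kron_index[of i "1\<^sub>m a" "1\<^sub>m b" j] ij by (simp only: index_one_mat(2,3))
  also have "\<dots> = (if i = j then 1 else 0)"
    using q e by (simp only: index_one_mat(1)) auto
  also have "\<dots> = (1\<^sub>m (a * b) :: bit mat) $$ (i, j)" using ij by simp
  finally show "kron (1\<^sub>m a) (1\<^sub>m b) $$ (i, j) = (1\<^sub>m (a * b) :: bit mat) $$ (i, j)" .
qed auto

lemma divmod_aux:
  assumes "(c::nat) > 0"
  shows "i div (b * c) = i div c div b" "(i mod (b * c)) div c = i div c mod b" "(i mod (b * c)) mod c = i mod c"
proof -
  show "i div (b * c) = i div c div b" by (metis div_mult2_eq mult.commute)
  have m: "i mod (b * c) = c * (i div c mod b) + i mod c" by (metis mod_mult2_eq mult.commute)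
  show "(i mod (b * c)) div c = i div c mod b" unfolding m using assms by simp
  show "(i mod (b * c)) mod c = i mod c" unfolding m using assms by simp
qed

lemma kron_assoc: "kron (kron A B) C = kron A (kron B C)"
proof (rule eq_matI)
  fix i j assume i: "i < dim_row (kron A (kron B C))" and j: "j < dim_col (kron A (kron B C))"
  define a b c a' b' c' where "a = dim_row A" "b = dim_row B" "c = dim_row C"
    "a' = dim_col A" "b' = dim_col B" "c' = dim_col C"
  note dd = a_b_c_a'_b'_c'_def[symmetric]
  have ii: "i < a * (b * c)" using i by (simp add: dd)
  have jj: "j < a' * (b' * c')" using j by (simp add: dd)
  have c0: "c > 0" "b > 0" "c' > 0" "b' > 0" using ii jj by (auto intro: gr0I)
  note dmi = divmod_aux[OF c0(1), of i b] and dmj = divmod_aux[OF c0(3), of j b']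
  have lt1: "i div c < a * b" using ii by (simp add: less_mult_imp_div_less mult.assoc)
  have lt2: "j div c' < a' * b'" using jj by (simp add: less_mult_imp_div_less mult.assoc)
  have lt3: "i mod (b * c) < b * c" "j mod (b' * c') < b' * c'" using c0 by simp_all
  have ii': "i < a * b * c" "j < a' * b' * c'" using ii jj by (simp_all add: mult.assoc)
  have "kron (kron A B) C $$ (i,j) = kron A B $$ (i div c, j div c') * C $$ (i mod c, j mod c')"
    using kron_index[of i "kron A B" C j] ii' by (simp only: kron_dims dd)
  also have "\<dots> = (A $$ (i div c div b, j div c' div b') * B $$ (i div c mod b, j div c' mod b')) * C $$ (i mod c, j mod c')"
    using kron_index[of "i div c" A B "j div c'"] lt1 lt2 by (simp only: dd)
  also have "\<dots> = A $$ (i div (b*c), j div (b'*c')) * (B $$ ((i mod (b*c)) div c, (j mod (b'*c')) div c') * C $$ ((i mod (b*c)) mod c, (j mod (b'*c')) mod c'))"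
    by (simp only: dmi dmj mult.assoc)
  also have "\<dots> = A $$ (i div (b*c), j div (b'*c')) * kron B C $$ (i mod (b*c), j mod (b'*c'))"
    using kron_index[of "i mod (b*c)" B C "j mod (b'*c')"] lt3 by (simp only: dd)
  also have "\<dots> = kron A (kron B C) $$ (i,j)"
    using kron_index[of i A "kron B C" j] ii jj by (simp only: kron_dims dd)
  finally show "kron (kron A B) C $$ (i,j) = kron A (kron B C) $$ (i,j)" .
qed (simp_all add: mult.assoc)


lemma dsum_dims[simp]: "dim_row (mat_dsum A B) = dim_row A + dim_row B" "dim_col (mat_dsum A B) = dim_col A + dim_col B"
  unfolding mat_dsum_def by (simp_all only: index_mat_four_block(2,3))

lemma dsum_index: "i < dim_row A + dim_row B \<Longrightarrow> j < dim_col A + dim_col B \<Longrightarrow> mat_dsum A B $$ (i,j)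
  = (if i < dim_row A then if j < dim_col A then A $$ (i,j) else 0
     else if j < dim_col A then 0 else B $$ (i - dim_row A, j - dim_col A))"
  unfolding mat_dsum_def by (subst index_mat_four_block(1)) auto

lemma dsum_carrier[simp]: assumes "A \<in> carrier_mat a a" "B \<in> carrier_mat b b" shows "mat_dsum A B \<in> carrier_mat (a+b) (a+b)"
proof -
  have d: "dim_row A = a" "dim_col A = a" "dim_row B = b" "dim_col B = b" using assms by auto
  show ?thesis by (rule carrier_matI) (simp_all only: dsum_dims d)
qed

lemma dsum_add:
  assumes A: "A \<in> carrier_mat a a" and C: "C \<in> carrier_mat a a" and B: "B \<in> carrier_mat b b" and D: "D \<in> carrier_mat b b"
  shows "mat_dsum (A + C) (B + D) = mat_dsum A B + mat_dsum C D"
proof (rule eq_matI)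
  have d: "dim_row A = a" "dim_col A = a" "dim_row B = b" "dim_col B = b"
    "dim_row C = a" "dim_col C = a" "dim_row D = b" "dim_col D = b" using assms by auto
  fix i j assume "i < dim_row (mat_dsum A B + mat_dsum C D)" "j < dim_col (mat_dsum A B + mat_dsum C D)"
  then have ij: "i < a+b" "j < a+b" by (simp_all add: d)
  show "mat_dsum (A + C) (B + D) $$ (i, j) = (mat_dsum A B + mat_dsum C D) $$ (i, j)"
    using ij by (simp add: dsum_index d)
qed (use assms in auto)

lemma dsum_mult:
  assumes A: "A \<in> carrier_mat a a" and C: "C \<in> carrier_mat a a" and B: "B \<in> carrier_mat b b" and D: "D \<in> carrier_mat b b"
  shows "mat_dsum A B * mat_dsum C D = mat_dsum (A * C) (B * D)"
proof -
  have "mat_dsum A B * mat_dsum C D = four_block_mat (A * C + 0\<^sub>m a b * 0\<^sub>m b a) (A * 0\<^sub>m a b + 0\<^sub>m a b * D)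
    (0\<^sub>m b a * C + B * 0\<^sub>m b a) (0\<^sub>m b a * 0\<^sub>m a b + B * D)"
  proof -
    have d: "dim_row A = a" "dim_col A = a" "dim_row B = b" "dim_col B = b"
      "dim_row C = a" "dim_col C = a" "dim_row D = b" "dim_col D = b" using assms by auto
    show ?thesis unfolding mat_dsum_def d by (rule mult_four_block_mat) (use A B C D in auto)
  qed
  also have "\<dots> = mat_dsum (A * C) (B * D)"
    unfolding mat_dsum_def using A B C D by simp
  finally show ?thesis .
qed

lemma dsum_one: "mat_dsum (1\<^sub>m a) (1\<^sub>m b) = (1\<^sub>m (a+b) :: bit mat)"
  unfolding mat_dsum_def by simp

lemma dsum_zero_left: "A \<in> carrier_mat n n \<Longrightarrow> mat_dsum (0\<^sub>m 0 0) A = A"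
  by (rule eq_matI) (auto simp: dsum_index)

lemma dsum_zero_right: "A \<in> carrier_mat n n \<Longrightarrow> mat_dsum A (0\<^sub>m 0 0) = A"
  by (rule eq_matI) (auto simp: dsum_index)

lemma dsum_assoc:
  assumes A: "A \<in> carrier_mat a a" and B: "B \<in> carrier_mat b b" and C: "C \<in> carrier_mat c c"
  shows "mat_dsum (mat_dsum A B) C = mat_dsum A (mat_dsum B C)"
proof (rule eq_matI)
  have d: "dim_row A = a" "dim_col A = a" "dim_row B = b" "dim_col B = b" "dim_row C = c" "dim_col C = c"
    using assms by auto
  fix i j assume "i < dim_row (mat_dsum A (mat_dsum B C))" "j < dim_col (mat_dsum A (mat_dsum B C))"
  then have ij: "i < a+b+c" "j < a+b+c" by (simp_all add: d)
  show "mat_dsum (mat_dsum A B) C $$ (i, j) = mat_dsum A (mat_dsum B C) $$ (i, j)"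
    using ij by (auto simp: dsum_index d)
qed (use assms in auto)

lemma dm_sub: assumes "(c::nat) > 0" "a * c \<le> i" shows "(i - a*c) div c = i div c - a" "(i - a*c) mod c = i mod c"
proof -
  obtain k where k: "i = a*c + k" using assms(2) le_Suc_ex by blast
  show "(i - a*c) div c = i div c - a" unfolding k using assms(1) by simp
  show "(i - a*c) mod c = i mod c" unfolding k using assms(1) by simp
qed

lemma kron_dsum_left:
  assumes A: "A \<in> carrier_mat a a" and B: "B \<in> carrier_mat b b" and C: "C \<in> carrier_mat c c"
  shows "kron (mat_dsum A B) C = mat_dsum (kron A C) (kron B C)"
proof (rule eq_matI)
  have d: "dim_row A = a" "dim_col A = a" "dim_row B = b" "dim_col B = b" "dim_row C = c" "dim_col C = c"
    using assms by auto
  fix i j assume "i < dim_row (mat_dsum (kron A C) (kron B C))" "j < dim_col (mat_dsum (kron A C) (kron B C))"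
  then have ij: "i < a*c+b*c" "j < a*c+b*c" by (simp_all add: d)
  have c0: "c > 0" using ij by (auto intro: gr0I)
  have ij2: "i < (a+b)*c" "j < (a+b)*c" using ij by (simp_all add: distrib_right)
  have lhs: "kron (mat_dsum A B) C $$ (i,j) = mat_dsum A B $$ (i div c, j div c) * C $$ (i mod c, j mod c)"
    using kron_index[of i "mat_dsum A B" C j] ij2 by (simp only: d dsum_dims)
  have qi: "i div c < a + b" "j div c < a + b" using ij2 by (simp_all add: less_mult_imp_div_less)
  have ia: "i < a * c \<longleftrightarrow> i div c < a" "j < a * c \<longleftrightarrow> j div c < a"
    using c0 by (simp_all add: div_less_iff_less_mult)
  show "kron (mat_dsum A B) C $$ (i,j) = mat_dsum (kron A C) (kron B C) $$ (i,j)"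
  proof (cases "i < a*c")
    case True
    note i1 = True
    show ?thesis
    proof (cases "j < a*c")
      case True
      then show ?thesis using i1 ia lhs qi kron_index[of i A C j] dsum_index[of i A B "j div c"]
        by (simp add: d dsum_index)
    next
      case False
      then show ?thesis using i1 ia lhs qi ij c0
        by (simp add: d dsum_index)
    qed
  next
    case False
    note i1 = False
    show ?thesis
    proof (cases "j < a*c")
      case True
      then show ?thesis using i1 ia lhs qi ij c0
        by (simp add: d dsum_index)
    next
      case False
      have lt: "i - a*c < b*c" "j - a*c < b*c" using ij(1) ij(2) False i1 by linarith+
      have e: "mat_dsum (kron A C) (kron B C) $$ (i,j) = kron B C $$ (i - a*c, j - a*c)"
        using False i1 ij by (simp add: d dsum_index)
      have e2: "kron B C $$ (i - a*c, j - a*c) = B $$ (i div c - a, j div c - a) * C $$ (i mod c, j mod c)"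
        using kron_index[of "i - a*c" B C "j - a*c"] lt dm_sub[OF c0, of a i] dm_sub[OF c0, of a j] False i1
        by (simp only: d)
      have e3: "mat_dsum A B $$ (i div c, j div c) = B $$ (i div c - a, j div c - a)"
        using qi ia False i1 by (simp add: dsum_index d)
      show ?thesis unfolding lhs e e2 e3 ..
    qed
  qed
qed (use assms in \<open>auto simp: distrib_right\<close>)


definition lwf :: "lmod \<Rightarrow> bool" where
  "lwf M \<longleftrightarrow> fst M \<in> carrier_mat (ldim M) (ldim M) \<and> snd M \<in> carrier_mat (ldim M) (ldim M)"

lemma wfD: "lwf M \<Longrightarrow> fst M \<in> carrier_mat (ldim M) (ldim M)" "lwf M \<Longrightarrow> snd M \<in> carrier_mat (ldim M) (ldim M)"
  by (simp_all add: lwf_def)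

lemma wfI: "fst M \<in> carrier_mat n n \<Longrightarrow> snd M \<in> carrier_mat n n \<Longrightarrow> lwf M \<and> ldim M = n"
  by (auto simp: lwf_def ldim_def)

lemma ldim_sum: "ldim (lmod_sum M N) = ldim M + ldim N"
  by (simp add: ldim_def lmod_sum_def)

lemma wf_sum: "lwf M \<Longrightarrow> lwf N \<Longrightarrow> lwf (lmod_sum M N)"
  unfolding lwf_def ldim_sum by (simp add: lmod_sum_def)

lemma ldim_tensor: "ldim (lmod_tensor M N) = ldim M * ldim N"
  by (simp add: ldim_def lmod_tensor_def Let_def)

lemma wf_tensor: assumes "lwf M" "lwf N" shows "lwf (lmod_tensor M N)"
proof -
  have a: "fst M \<in> carrier_mat (ldim M) (ldim M)" "snd M \<in> carrier_mat (ldim M) (ldim M)"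
    "fst N \<in> carrier_mat (ldim N) (ldim N)" "snd N \<in> carrier_mat (ldim N) (ldim N)"
    using assms by (simp_all add: lwf_def)
  show ?thesis unfolding lwf_def ldim_tensor
    by (simp add: lmod_tensor_def Let_def a kron_carrier[OF a(1) one_carrier_mat]
      kron_carrier[OF one_carrier_mat a(3)] kron_carrier[OF a(2) one_carrier_mat]
      kron_carrier[OF one_carrier_mat a(4)] kron_carrier[OF a(1) a(3)])
qed

lemma wf_zero: "lwf lmod_zero" "ldim lmod_zero = 0"
  by (auto simp: lwf_def ldim_def lmod_zero_def)

lemma wf_copies: "lwf M \<Longrightarrow> lwf (lmod_copies k M)"
  by (induction k) (auto simp: wf_zero wf_sum)

lemma ldim_copies: "ldim (lmod_copies k M) = k * ldim M"
  by (induction k) (auto simp: wf_zero ldim_sum)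

lemma cancel_mult:
  assumes A: "(A :: bit mat) \<in> carrier_mat n n" and B: "B \<in> carrier_mat n n" and W: "W \<in> carrier_mat n m" and e: "A * B = 1\<^sub>m n"
  shows "A * (B * W) = W"
proof -
  have "A * (B * W) = (A * B) * W" by (rule assoc_mult_mat[OF A B W, symmetric])
  also have "\<dots> = W" unfolding e by (rule left_mult_one_mat[OF W])
  finally show ?thesis .
qed

lemma conj_comm:
  assumes S: "(S :: bit mat) \<in> carrier_mat n n" and T: "T \<in> carrier_mat n n" and X: "X \<in> carrier_mat n n" and Y: "Y \<in> carrier_mat n n"
    and st: "S * T = 1\<^sub>m n" and ts: "T * S = 1\<^sub>m n" and e: "S * X = Y * S"
  shows "T * Y = X * T"
proof -
  have TY: "T * Y \<in> carrier_mat n n" using T Y by simp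
  have "T * Y = (T * Y) * 1\<^sub>m n" by (rule right_mult_one_mat[OF TY, symmetric])
  also have "\<dots> = (T * Y) * (S * T)" unfolding st ..
  also have "\<dots> = ((T * Y) * S) * T" by (rule assoc_mult_mat[OF TY S T, symmetric])
  also have "\<dots> = (T * (Y * S)) * T" unfolding assoc_mult_mat[OF T Y S] ..
  also have "\<dots> = (T * (S * X)) * T" unfolding e ..
  also have "\<dots> = ((T * S) * X) * T" unfolding assoc_mult_mat[OF T S X] ..
  also have "\<dots> = X * T" unfolding ts left_mult_one_mat[OF X] ..
  finally show ?thesis .
qed

lemma conj_trans:
  assumes S: "(S :: bit mat) \<in> carrier_mat n n" and S': "S' \<in> carrier_mat n n" and X: "X \<in> carrier_mat n n" and Y: "Y \<in> carrier_mat n n"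
    and Z: "Z \<in> carrier_mat n n" and e: "S * X = Y * S" and e': "S' * Y = Z * S'"
  shows "(S' * S) * X = Z * (S' * S)"
proof -
  have "(S' * S) * X = S' * (S * X)" by (rule assoc_mult_mat[OF S' S X])
  also have "\<dots> = S' * (Y * S)" unfolding e ..
  also have "\<dots> = (S' * Y) * S" by (rule assoc_mult_mat[OF S' Y S, symmetric])
  also have "\<dots> = (Z * S') * S" unfolding e' ..
  also have "\<dots> = Z * (S' * S)" by (rule assoc_mult_mat[OF Z S' S])
  finally show ?thesis .
qed

lemma inv_trans:
  assumes S: "(S :: bit mat) \<in> carrier_mat n n" and S': "S' \<in> carrier_mat n n" and T: "T \<in> carrier_mat n n" and T': "T' \<in> carrier_mat n n"
    and e: "S * T = 1\<^sub>m n" and e': "S' * T' = 1\<^sub>m n"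
  shows "(S' * S) * (T * T') = 1\<^sub>m n"
proof -
  have TT: "T * T' \<in> carrier_mat n n" using T T' by simp
  have "(S' * S) * (T * T') = S' * (S * (T * T'))" by (rule assoc_mult_mat[OF S' S TT])
  also have "\<dots> = S' * T'" unfolding cancel_mult[OF S T T' e] ..
  finally show ?thesis using e' by simp
qed

lemma iso_intro:
  assumes "lwf M" "lwf N" "ldim M = n" "ldim N = n" "S \<in> carrier_mat n n" "T \<in> carrier_mat n n"
    "S * T = 1\<^sub>m n" "T * S = 1\<^sub>m n" "S * fst M = fst N * S" "S * snd M = snd N * S"
  shows "lmod_iso M N"
proof -
  have inv: "invertible_mat S" unfolding invertible_mat_def inverts_mat_def square_mat.simps
    by (intro conjI exI[of _ T]) (use assms in auto)
  show ?thesis unfolding lmod_iso_def by (intro conjI exI[of _ S]) (use assms inv in auto)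
qed

lemma iso_elim:
  assumes "lmod_iso M N"
  obtains S T where "ldim M = ldim N" "S \<in> carrier_mat (ldim M) (ldim M)" "T \<in> carrier_mat (ldim M) (ldim M)"
    "S * T = 1\<^sub>m (ldim M)" "T * S = 1\<^sub>m (ldim M)" "S * fst M = fst N * S" "S * snd M = snd N * S"
proof -
  from assms obtain S where S: "ldim M = ldim N" "S \<in> carrier_mat (ldim N) (ldim M)" "invertible_mat S"
    "S * fst M = fst N * S" "S * snd M = snd N * S" unfolding lmod_iso_def by auto
  from S(3) obtain T where T: "S * T = 1\<^sub>m (dim_row S)" "T * S = 1\<^sub>m (dim_row T)"
    unfolding invertible_mat_def inverts_mat_def by auto
  have dS: "dim_row S = ldim M" "dim_col S = ldim M" using S by auto
  have "dim_col (S * T) = dim_col (1\<^sub>m (dim_row S) :: bit mat)" using T(1) by simp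
  then have "dim_col T = ldim M" using dS by simp
  moreover have "dim_col (T * S) = dim_col (1\<^sub>m (dim_row T) :: bit mat)" using T(2) by simp
  then have "dim_row T = ldim M" using dS by simp
  ultimately have Tc: "T \<in> carrier_mat (ldim M) (ldim M)" by auto
  show ?thesis using that[of S T] S Tc T dS by auto
qed

lemma iso_refl: "lwf M \<Longrightarrow> lmod_iso M M"
  by (rule iso_intro[where S="1\<^sub>m (ldim M)" and T="1\<^sub>m (ldim M)" and n="ldim M"]) (auto dest: wfD)

lemma iso_sym: assumes "lwf M" "lwf N" "lmod_iso M N" shows "lmod_iso N M"
proof -
  obtain S T where st: "ldim M = ldim N" "S \<in> carrier_mat (ldim M) (ldim M)" "T \<in> carrier_mat (ldim M) (ldim M)"
    "S * T = 1\<^sub>m (ldim M)" "T * S = 1\<^sub>m (ldim M)" "S * fst M = fst N * S" "S * snd M = snd N * S"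
    using iso_elim[OF assms(3)] by blast
  let ?n = "ldim M"
  have c: "fst M \<in> carrier_mat ?n ?n" "snd M \<in> carrier_mat ?n ?n" "fst N \<in> carrier_mat ?n ?n" "snd N \<in> carrier_mat ?n ?n"
    using assms st(1) by (auto dest: wfD)
  show ?thesis
    by (rule iso_intro[where S=T and T=S and n="?n"])
      (use assms st c conj_comm[OF st(2,3) c(1,3) st(4,5,6)] conj_comm[OF st(2,3) c(2,4) st(4,5,7)] in auto)
qed

lemma iso_trans: assumes "lwf M" "lwf N" "lwf K" "lmod_iso M N" "lmod_iso N K" shows "lmod_iso M K"
proof -
  obtain S T where st: "ldim M = ldim N" "S \<in> carrier_mat (ldim M) (ldim M)" "T \<in> carrier_mat (ldim M) (ldim M)"
    "S * T = 1\<^sub>m (ldim M)" "T * S = 1\<^sub>m (ldim M)" "S * fst M = fst N * S" "S * snd M = snd N * S"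
    using iso_elim[OF assms(4)] by blast
  obtain S' T' where st': "ldim N = ldim K" "S' \<in> carrier_mat (ldim N) (ldim N)" "T' \<in> carrier_mat (ldim N) (ldim N)"
    "S' * T' = 1\<^sub>m (ldim N)" "T' * S' = 1\<^sub>m (ldim N)" "S' * fst N = fst K * S'" "S' * snd N = snd K * S'"
    using iso_elim[OF assms(5)] by blast
  let ?n = "ldim M"
  have c: "fst M \<in> carrier_mat ?n ?n" "snd M \<in> carrier_mat ?n ?n" "fst N \<in> carrier_mat ?n ?n" "snd N \<in> carrier_mat ?n ?n"
     "fst K \<in> carrier_mat ?n ?n" "snd K \<in> carrier_mat ?n ?n"
    using assms st(1) st'(1) by (auto dest: wfD)
  have S': "S' \<in> carrier_mat ?n ?n" "T' \<in> carrier_mat ?n ?n" "S' * T' = 1\<^sub>m ?n" "T' * S' = 1\<^sub>m ?n"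
    using st' st by auto
  show ?thesis
    by (rule iso_intro[where S="S' * S" and T="T * T'" and n="?n"])
      (use assms st st' c S' inv_trans[OF st(2) S'(1) st(3) S'(2) st(4) S'(3)] inv_trans[OF S'(2) st(3) S'(1) st(2) S'(4) st(5)]
        conj_trans[OF st(2) S'(1) c(1,3,5) st(6) st'(6)] conj_trans[OF st(2) S'(1) c(2,4,6) st(7) st'(7)] in auto)
qed


lemma fst_sum[simp]: "fst (lmod_sum A B) = mat_dsum (fst A) (fst B)" and snd_sum[simp]: "snd (lmod_sum A B) = mat_dsum (snd A) (snd B)"
  by (simp_all add: lmod_sum_def)

lemma wf_carrier: "lwf M \<Longrightarrow> ldim M = n \<Longrightarrow> fst M \<in> carrier_mat n n \<and> snd M \<in> carrier_mat n n"
  by (auto simp: lwf_def)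

lemma iso_sum_cong:
  assumes w: "lwf A" "lwf A'" "lwf B" "lwf B'" and i1: "lmod_iso A A'" and i2: "lmod_iso B B'"
  shows "lmod_iso (lmod_sum A B) (lmod_sum A' B')"
proof -
  obtain S T where st: "ldim A = ldim A'" "S \<in> carrier_mat (ldim A) (ldim A)" "T \<in> carrier_mat (ldim A) (ldim A)"
    "S * T = 1\<^sub>m (ldim A)" "T * S = 1\<^sub>m (ldim A)" "S * fst A = fst A' * S" "S * snd A = snd A' * S"
    using iso_elim[OF i1] by blast
  obtain S' T' where st': "ldim B = ldim B'" "S' \<in> carrier_mat (ldim B) (ldim B)" "T' \<in> carrier_mat (ldim B) (ldim B)"
    "S' * T' = 1\<^sub>m (ldim B)" "T' * S' = 1\<^sub>m (ldim B)" "S' * fst B = fst B' * S'" "S' * snd B = snd B' * S'"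
    using iso_elim[OF i2] by blast
  define a b where "a = ldim A" "b = ldim B"
  have c: "fst A \<in> carrier_mat a a" "snd A \<in> carrier_mat a a" "fst A' \<in> carrier_mat a a" "snd A' \<in> carrier_mat a a"
    "fst B \<in> carrier_mat b b" "snd B \<in> carrier_mat b b" "fst B' \<in> carrier_mat b b" "snd B' \<in> carrier_mat b b"
    using w st(1) st'(1) a_b_def by (auto simp: lwf_def)
  have s: "S \<in> carrier_mat a a" "T \<in> carrier_mat a a" "S' \<in> carrier_mat b b" "T' \<in> carrier_mat b b"
    using st st' a_b_def by auto
  show ?thesis
  proof (rule iso_intro[where S="mat_dsum S S'" and T="mat_dsum T T'" and n="a+b"])
    show "lwf (lmod_sum A B)" "lwf (lmod_sum A' B')" using w by (simp_all add: wf_sum)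
    show "ldim (lmod_sum A B) = a + b" "ldim (lmod_sum A' B') = a + b" using st st' a_b_def by (simp_all add: ldim_sum)
    show "mat_dsum S S' \<in> carrier_mat (a + b) (a + b)" "mat_dsum T T' \<in> carrier_mat (a + b) (a + b)" using s by simp_all
    show "mat_dsum S S' * mat_dsum T T' = 1\<^sub>m (a + b)"
      using st st' a_b_def by (simp add: dsum_mult[OF s(1,2,3,4)] dsum_one)
    show "mat_dsum T T' * mat_dsum S S' = 1\<^sub>m (a + b)"
      using st st' a_b_def by (simp add: dsum_mult[OF s(2,1,4,3)] dsum_one)
    show "mat_dsum S S' * fst (lmod_sum A B) = fst (lmod_sum A' B') * mat_dsum S S'"
      using st st' by (simp add: dsum_mult[OF s(1) c(1) s(3) c(5)] dsum_mult[OF c(3) s(1) c(7) s(3)])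
    show "mat_dsum S S' * snd (lmod_sum A B) = snd (lmod_sum A' B') * mat_dsum S S'"
      using st st' by (simp add: dsum_mult[OF s(1) c(2) s(3) c(6)] dsum_mult[OF c(4) s(1) c(8) s(3)])
  qed
qed

definition swap_mat :: "nat \<Rightarrow> nat \<Rightarrow> bit mat" where
  "swap_mat a b = four_block_mat (0\<^sub>m b a) (1\<^sub>m b) (1\<^sub>m a) (0\<^sub>m a b)"

lemma swap_carrier: "swap_mat a b \<in> carrier_mat (b + a) (a + b)"
  unfolding swap_mat_def by (rule four_block_carrier_mat) auto

lemma swap_inv: "swap_mat a b * swap_mat b a = 1\<^sub>m (b + a)"
proof -
  have "swap_mat a b * swap_mat b a = four_block_mat (0\<^sub>m b a * 0\<^sub>m a b + 1\<^sub>m b * 1\<^sub>m b) (0\<^sub>m b a * 1\<^sub>m a + 1\<^sub>m b * 0\<^sub>m b a)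
     (1\<^sub>m a * 0\<^sub>m a b + 0\<^sub>m a b * 1\<^sub>m b) (1\<^sub>m a * 1\<^sub>m a + 0\<^sub>m a b * 0\<^sub>m b a)"
    unfolding swap_mat_def by (rule mult_four_block_mat) auto
  also have "\<dots> = four_block_mat (1\<^sub>m b) (0\<^sub>m b a) (0\<^sub>m a b) (1\<^sub>m a)" by simp
  also have "\<dots> = 1\<^sub>m (b + a)" by simp
  finally show ?thesis .
qed

lemma swap_conj:
  assumes X: "X \<in> carrier_mat a a" and Y: "Y \<in> carrier_mat b b"
  shows "swap_mat a b * mat_dsum X Y = mat_dsum Y X * swap_mat a b"
proof -
  have d: "dim_row X = a" "dim_col X = a" "dim_row Y = b" "dim_col Y = b" using X Y by auto
  have "swap_mat a b * mat_dsum X Y = four_block_mat (0\<^sub>m b a * X + 1\<^sub>m b * 0\<^sub>m b a) (0\<^sub>m b a * 0\<^sub>m a b + 1\<^sub>m b * Y)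
     (1\<^sub>m a * X + 0\<^sub>m a b * 0\<^sub>m b a) (1\<^sub>m a * 0\<^sub>m a b + 0\<^sub>m a b * Y)"
    unfolding swap_mat_def mat_dsum_def d by (rule mult_four_block_mat) (use X Y in auto)
  also have "\<dots> = four_block_mat (0\<^sub>m b a) Y X (0\<^sub>m a b)" using X Y by simp
  also have "\<dots> = four_block_mat (Y * 0\<^sub>m b a + 0\<^sub>m b a * 1\<^sub>m a) (Y * 1\<^sub>m b + 0\<^sub>m b a * 0\<^sub>m a b)
     (0\<^sub>m a b * 0\<^sub>m b a + X * 1\<^sub>m a) (0\<^sub>m a b * 1\<^sub>m b + X * 0\<^sub>m a b)" using X Y by simp
  also have "\<dots> = mat_dsum Y X * swap_mat a b"
    unfolding swap_mat_def mat_dsum_def d by (rule mult_four_block_mat[symmetric]) (use X Y in auto)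
  finally show ?thesis .
qed

lemma iso_sum_comm: assumes w: "lwf A" "lwf B" shows "lmod_iso (lmod_sum A B) (lmod_sum B A)"
proof -
  define a b where "a = ldim A" "b = ldim B"
  have c: "fst A \<in> carrier_mat a a" "snd A \<in> carrier_mat a a" "fst B \<in> carrier_mat b b" "snd B \<in> carrier_mat b b"
    using w a_b_def by (auto simp: lwf_def)
  have sc: "swap_mat a b \<in> carrier_mat (a + b) (a + b)" "swap_mat b a \<in> carrier_mat (a + b) (a + b)"
    using swap_carrier[of a b] swap_carrier[of b a] by (simp_all add: add.commute)
  show ?thesis
    by (rule iso_intro[where S="swap_mat a b" and T="swap_mat b a" and n="a+b"])
      (use w a_b_def sc swap_inv[of a b] swap_inv[of b a] swap_conj[OF c(1,3)] swap_conj[OF c(2,4)] in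
        \<open>auto simp: wf_sum ldim_sum add.commute\<close>)
qed

lemma sum_assoc: assumes "lwf A" "lwf B" "lwf C" shows "lmod_sum (lmod_sum A B) C = lmod_sum A (lmod_sum B C)"
  using assms unfolding lwf_def by (simp add: lmod_sum_def dsum_assoc[of "fst A" "ldim A" "fst B" "ldim B" "fst C" "ldim C"]
     dsum_assoc[of "snd A" "ldim A" "snd B" "ldim B" "snd C" "ldim C"])

lemma sum_zero_left: "lwf A \<Longrightarrow> lmod_sum lmod_zero A = A"
  unfolding lwf_def lmod_zero_def lmod_sum_def by (auto simp: dsum_zero_left)

lemma sum_zero_right: "lwf A \<Longrightarrow> lmod_sum A lmod_zero = A"
  unfolding lwf_def lmod_zero_def lmod_sum_def by (auto simp: dsum_zero_right)


lemma fst_tensor: "fst (lmod_tensor M N) = kron (fst M) (1\<^sub>m (ldim N)) + kron (1\<^sub>m (ldim M)) (fst N)"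
  and snd_tensor: "snd (lmod_tensor M N) = kron (snd M) (1\<^sub>m (ldim N)) + kron (fst M) (fst N) + kron (1\<^sub>m (ldim M)) (snd N)"
  by (simp_all add: lmod_tensor_def Let_def)

lemma tensor_sum_left:
  assumes w: "lwf A" "lwf B" "lwf X"
  shows "lmod_tensor (lmod_sum A B) X = lmod_sum (lmod_tensor A X) (lmod_tensor B X)"
proof -
  define a b x where "a = ldim A" "b = ldim B" "x = ldim X"
  have c: "fst A \<in> carrier_mat a a" "snd A \<in> carrier_mat a a" "fst B \<in> carrier_mat b b" "snd B \<in> carrier_mat b b"
    "fst X \<in> carrier_mat x x" "snd X \<in> carrier_mat x x"
    using w a_b_x_def by (auto simp: lwf_def)
  have o: "1\<^sub>m a \<in> carrier_mat a a" "1\<^sub>m b \<in> carrier_mat b b" "1\<^sub>m x \<in> carrier_mat x x" by auto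
  have la: "ldim (lmod_sum A B) = a + b" using a_b_x_def by (simp add: ldim_sum)
  have one: "(1\<^sub>m (a + b) :: bit mat) = mat_dsum (1\<^sub>m a) (1\<^sub>m b)" by (simp add: dsum_one)
  have "fst (lmod_tensor (lmod_sum A B) X) = kron (mat_dsum (fst A) (fst B)) (1\<^sub>m x) + kron (mat_dsum (1\<^sub>m a) (1\<^sub>m b)) (fst X)"
    unfolding fst_tensor la one by (simp add: a_b_x_def)
  also have "\<dots> = mat_dsum (kron (fst A) (1\<^sub>m x)) (kron (fst B) (1\<^sub>m x)) + mat_dsum (kron (1\<^sub>m a) (fst X)) (kron (1\<^sub>m b) (fst X))"
    by (simp only: kron_dsum_left[OF c(1) c(3) o(3)] kron_dsum_left[OF o(1) o(2) c(5)])
  also have "\<dots> = fst (lmod_sum (lmod_tensor A X) (lmod_tensor B X))"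
    unfolding fst_sum fst_tensor a_b_x_def[symmetric]
    by (rule dsum_add[symmetric]) (use c o in auto)
  finally have f: "fst (lmod_tensor (lmod_sum A B) X) = fst (lmod_sum (lmod_tensor A X) (lmod_tensor B X))" .
  have "snd (lmod_tensor (lmod_sum A B) X) = kron (mat_dsum (snd A) (snd B)) (1\<^sub>m x) + kron (mat_dsum (fst A) (fst B)) (fst X) + kron (mat_dsum (1\<^sub>m a) (1\<^sub>m b)) (snd X)"
    unfolding snd_tensor la one by (simp add: a_b_x_def)
  also have "\<dots> = mat_dsum (kron (snd A) (1\<^sub>m x)) (kron (snd B) (1\<^sub>m x)) + mat_dsum (kron (fst A) (fst X)) (kron (fst B) (fst X))
      + mat_dsum (kron (1\<^sub>m a) (snd X)) (kron (1\<^sub>m b) (snd X))"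
    by (simp only: kron_dsum_left[OF c(2) c(4) o(3)] kron_dsum_left[OF c(1) c(3) c(5)] kron_dsum_left[OF o(1) o(2) c(6)])
  also have "\<dots> = mat_dsum (kron (snd A) (1\<^sub>m x) + kron (fst A) (fst X)) (kron (snd B) (1\<^sub>m x) + kron (fst B) (fst X))
      + mat_dsum (kron (1\<^sub>m a) (snd X)) (kron (1\<^sub>m b) (snd X))"
    by (subst dsum_add[symmetric]) (use c o in auto)
  also have "\<dots> = snd (lmod_sum (lmod_tensor A X) (lmod_tensor B X))"
    unfolding snd_sum snd_tensor a_b_x_def[symmetric]
    by (rule dsum_add[symmetric]) (use c o in auto)
  finally have s: "snd (lmod_tensor (lmod_sum A B) X) = snd (lmod_sum (lmod_tensor A X) (lmod_tensor B X))" .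
  show ?thesis using f s by (simp add: prod_eq_iff)
qed

lemma mat00: "(A :: bit mat) \<in> carrier_mat 0 0 \<Longrightarrow> A = 0\<^sub>m 0 0"
  by (rule eq_matI) auto

lemma tensor_zero_left: "lwf X \<Longrightarrow> lmod_tensor lmod_zero X = lmod_zero"
proof -
  assume w: "lwf X"
  have c: "fst X \<in> carrier_mat (ldim X) (ldim X)" "snd X \<in> carrier_mat (ldim X) (ldim X)" using w by (auto simp: lwf_def)
  have z: "ldim lmod_zero = 0" "fst lmod_zero = 0\<^sub>m 0 0" "snd lmod_zero = 0\<^sub>m 0 0" by (simp_all add: lmod_zero_def ldim_def)
  have "fst (lmod_tensor lmod_zero X) \<in> carrier_mat 0 0" "snd (lmod_tensor lmod_zero X) \<in> carrier_mat 0 0"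
    unfolding fst_tensor snd_tensor z using c by (auto intro!: add_carrier_mat kron_carrier)
  then show ?thesis by (simp add: prod_eq_iff mat00 lmod_zero_def)
qed

lemma tensor_iso_left:
  assumes w: "lwf A" "lwf A'" "lwf X" and i: "lmod_iso A A'"
  shows "lmod_iso (lmod_tensor A X) (lmod_tensor A' X)"
proof -
  obtain S T where st: "ldim A = ldim A'" "S \<in> carrier_mat (ldim A) (ldim A)" "T \<in> carrier_mat (ldim A) (ldim A)"
    "S * T = 1\<^sub>m (ldim A)" "T * S = 1\<^sub>m (ldim A)" "S * fst A = fst A' * S" "S * snd A = snd A' * S"
    using iso_elim[OF i] by blast
  define a x where "a = ldim A" "x = ldim X"
  have c: "fst A \<in> carrier_mat a a" "snd A \<in> carrier_mat a a" "fst A' \<in> carrier_mat a a" "snd A' \<in> carrier_mat a a"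
    "fst X \<in> carrier_mat x x" "snd X \<in> carrier_mat x x"
    using w st(1) a_x_def by (auto simp: lwf_def)
  have s: "S \<in> carrier_mat a a" "T \<in> carrier_mat a a" using st a_x_def by auto
  have o: "1\<^sub>m a \<in> carrier_mat a a" "1\<^sub>m x \<in> carrier_mat x x" by auto
  have la: "ldim A' = a" using st a_x_def by simp
  have ST: "S * T = 1\<^sub>m a" "T * S = 1\<^sub>m a" using st unfolding a_x_def by simp_all
  have ks: "kron S (1\<^sub>m x) \<in> carrier_mat (a*x) (a*x)" "kron T (1\<^sub>m x) \<in> carrier_mat (a*x) (a*x)"
    using kron_carrier[OF s(1) o(2)] kron_carrier[OF s(2) o(2)] by auto
  have k1: "kron (fst A) (1\<^sub>m x) \<in> carrier_mat (a*x) (a*x)" "kron (1\<^sub>m a) (fst X) \<in> carrier_mat (a*x) (a*x)"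
    "kron (fst A') (1\<^sub>m x) \<in> carrier_mat (a*x) (a*x)"
    "kron (snd A) (1\<^sub>m x) \<in> carrier_mat (a*x) (a*x)" "kron (snd A') (1\<^sub>m x) \<in> carrier_mat (a*x) (a*x)"
    "kron (fst A) (fst X) \<in> carrier_mat (a*x) (a*x)" "kron (fst A') (fst X) \<in> carrier_mat (a*x) (a*x)"
    "kron (1\<^sub>m a) (snd X) \<in> carrier_mat (a*x) (a*x)"
    using kron_carrier c o by auto
  show ?thesis
  proof (rule iso_intro[where S="kron S (1\<^sub>m x)" and T="kron T (1\<^sub>m x)" and n="a*x"])
    show "lwf (lmod_tensor A X)" "lwf (lmod_tensor A' X)" using w by (simp_all add: wf_tensor)
    show "ldim (lmod_tensor A X) = a * x" "ldim (lmod_tensor A' X) = a * x" using la a_x_def by (simp_all add: ldim_tensor)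
    show "kron S (1\<^sub>m x) \<in> carrier_mat (a * x) (a * x)" "kron T (1\<^sub>m x) \<in> carrier_mat (a * x) (a * x)" using ks by auto
    show "kron S (1\<^sub>m x) * kron T (1\<^sub>m x) = 1\<^sub>m (a * x)"
      unfolding kron_mult[OF s(1) o(2) s(2) o(2)] ST by (simp add: kron_one)
    show "kron T (1\<^sub>m x) * kron S (1\<^sub>m x) = 1\<^sub>m (a * x)"
      unfolding kron_mult[OF s(2) o(2) s(1) o(2)] ST by (simp add: kron_one)
    have "kron S (1\<^sub>m x) * fst (lmod_tensor A X) = kron S (1\<^sub>m x) * kron (fst A) (1\<^sub>m x) + kron S (1\<^sub>m x) * kron (1\<^sub>m a) (fst X)"
      unfolding fst_tensor a_x_def[symmetric] by (rule mult_add_distrib_mat[OF ks(1) k1(1) k1(2)])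
    also have "\<dots> = kron (S * fst A) (1\<^sub>m x) + kron S (fst X)"
      using s c by (simp add: kron_mult[OF s(1) o(2) c(1) o(2)] kron_mult[OF s(1) o(2) o(1) c(5)])
    also have "\<dots> = kron (fst A' * S) (1\<^sub>m x) + kron S (fst X)" using st by simp
    also have "\<dots> = kron (fst A') (1\<^sub>m x) * kron S (1\<^sub>m x) + kron (1\<^sub>m a) (fst X) * kron S (1\<^sub>m x)"
      using s c by (simp add: kron_mult[OF c(3) o(2) s(1) o(2)] kron_mult[OF o(1) c(5) s(1) o(2)])
    also have "\<dots> = fst (lmod_tensor A' X) * kron S (1\<^sub>m x)"
      unfolding fst_tensor a_x_def[symmetric] la by (rule add_mult_distrib_mat[OF k1(3) k1(2) ks(1), symmetric])
    finally show "kron S (1\<^sub>m x) * fst (lmod_tensor A X) = fst (lmod_tensor A' X) * kron S (1\<^sub>m x)" .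
    have "kron S (1\<^sub>m x) * snd (lmod_tensor A X) = kron S (1\<^sub>m x) * kron (snd A) (1\<^sub>m x) + kron S (1\<^sub>m x) * kron (fst A) (fst X) + kron S (1\<^sub>m x) * kron (1\<^sub>m a) (snd X)"
      unfolding snd_tensor a_x_def[symmetric]
      using mult_add_distrib_mat[OF ks(1) add_carrier_mat[OF k1(6)] k1(8)] mult_add_distrib_mat[OF ks(1) k1(4) k1(6)]
      by simp
    also have "\<dots> = kron (S * snd A) (1\<^sub>m x) + kron (S * fst A) (fst X) + kron S (snd X)"
      using s c by (simp add: kron_mult[OF s(1) o(2) c(2) o(2)] kron_mult[OF s(1) o(2) c(1) c(5)] kron_mult[OF s(1) o(2) o(1) c(6)])
    also have "\<dots> = kron (snd A' * S) (1\<^sub>m x) + kron (fst A' * S) (fst X) + kron S (snd X)" using st by simp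
    also have "\<dots> = kron (snd A') (1\<^sub>m x) * kron S (1\<^sub>m x) + kron (fst A') (fst X) * kron S (1\<^sub>m x) + kron (1\<^sub>m a) (snd X) * kron S (1\<^sub>m x)"
      using s c by (simp add: kron_mult[OF c(4) o(2) s(1) o(2)] kron_mult[OF c(3) c(5) s(1) o(2)] kron_mult[OF o(1) c(6) s(1) o(2)])
    also have "\<dots> = snd (lmod_tensor A' X) * kron S (1\<^sub>m x)"
      unfolding snd_tensor a_x_def[symmetric] la
      using add_mult_distrib_mat[OF add_carrier_mat[OF k1(7)] k1(8) ks(1)] add_mult_distrib_mat[OF k1(5) k1(7) ks(1)]
      by simp
    finally show "kron S (1\<^sub>m x) * snd (lmod_tensor A X) = snd (lmod_tensor A' X) * kron S (1\<^sub>m x)" .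
  qed
qed


lemma kron_add_left': "dim_row A = dim_row B \<Longrightarrow> dim_col A = dim_col B \<Longrightarrow> kron (A + B) C = kron A C + kron B C"
proof -
  assume d: "dim_row A = dim_row B" "dim_col A = dim_col B"
  have c: "A \<in> carrier_mat (dim_row B) (dim_col B)" "B \<in> carrier_mat (dim_row B) (dim_col B)"
    "C \<in> carrier_mat (dim_row C) (dim_col C)" using d by (auto intro!: carrier_matI)
  show ?thesis by (rule kron_add_left[OF c])
qed

lemma kron_add_right': "dim_row B = dim_row C \<Longrightarrow> dim_col B = dim_col C \<Longrightarrow> kron A (B + C) = kron A B + kron A C"
proof -
  assume d: "dim_row B = dim_row C" "dim_col B = dim_col C"
  have c: "A \<in> carrier_mat (dim_row A) (dim_col A)" "B \<in> carrier_mat (dim_row C) (dim_col C)"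
    "C \<in> carrier_mat (dim_row C) (dim_col C)" using d by (auto intro!: carrier_matI)
  show ?thesis by (rule kron_add_right[OF c])
qed

lemma rearr3: 
  assumes "(t1 :: 'a :: comm_monoid_add mat) \<in> carrier_mat n n" "t2 \<in> carrier_mat n n" "t3 \<in> carrier_mat n n"
  shows "(t1 + t2) + t3 = t1 + (t2 + t3)"
  using assms by (intro eq_matI) (auto simp: ac_simps)

lemma rearr6: 
  assumes "(t1 :: 'a :: comm_monoid_add mat) \<in> carrier_mat n n" "t2 \<in> carrier_mat n n" "t3 \<in> carrier_mat n n"
    "t4 \<in> carrier_mat n n" "t5 \<in> carrier_mat n n" "t6 \<in> carrier_mat n n"
  shows "((t1 + t2 + t3) + (t4 + t5)) + t6 = (t1 + (t2 + t4)) + ((t3 + t5) + t6)"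
proof (rule eq_matI)
  fix i j assume "i < dim_row ((t1 + (t2 + t4)) + ((t3 + t5) + t6))" "j < dim_col ((t1 + (t2 + t4)) + ((t3 + t5) + t6))"
  then have ij: "i < n" "j < n" using assms by auto
  have d: "dim_row t1 = n" "dim_col t1 = n" "dim_row t2 = n" "dim_col t2 = n" "dim_row t3 = n" "dim_col t3 = n"
    "dim_row t4 = n" "dim_col t4 = n" "dim_row t5 = n" "dim_col t5 = n" "dim_row t6 = n" "dim_col t6 = n" using assms by auto
  show "(((t1 + t2 + t3) + (t4 + t5)) + t6) $$ (i,j) = ((t1 + (t2 + t4)) + ((t3 + t5) + t6)) $$ (i,j)"
    using ij by (simp only: index_add_mat d) (simp only: add_ac)
qed (use assms in auto)

lemma kron_one1_right: "kron A (1\<^sub>m 1) = A"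
  by (rule eq_matI) auto

lemma kron_one1_left: "kron (1\<^sub>m 1) A = A"
  by (rule eq_matI) auto

lemma kron_zero1_right: "kron A (0\<^sub>m 1 1) = 0\<^sub>m (dim_row A) (dim_col A)"
  by (rule eq_matI) auto

lemma kron_zero1_left: "kron (0\<^sub>m 1 1) A = 0\<^sub>m (dim_row A) (dim_col A)"
  by (rule eq_matI) auto

lemma unit_facts: "fst lmod_unit = 0\<^sub>m 1 1" "snd lmod_unit = 0\<^sub>m 1 1" "ldim lmod_unit = 1" "lwf lmod_unit"
  by (simp_all add: lmod_unit_def ldim_def lwf_def)

lemma tensor_unit_right: "lwf X \<Longrightarrow> lmod_tensor X lmod_unit = X"
  unfolding lwf_def prod_eq_iff fst_tensor snd_tensor unit_facts kron_one1_right kron_zero1_right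
  by auto

lemma tensor_unit_left: "lwf X \<Longrightarrow> lmod_tensor lmod_unit X = X"
  unfolding lwf_def prod_eq_iff fst_tensor snd_tensor unit_facts kron_one1_left kron_zero1_left
  by auto

lemma tensor_assoc:
  assumes w: "lwf X" "lwf Y" "lwf Z"
  shows "lmod_tensor (lmod_tensor X Y) Z = lmod_tensor X (lmod_tensor Y Z)"
proof -
  define x y z where "x = ldim X" "y = ldim Y" "z = ldim Z"
  have c: "fst X \<in> carrier_mat x x" "snd X \<in> carrier_mat x x" "fst Y \<in> carrier_mat y y" "snd Y \<in> carrier_mat y y"
    "fst Z \<in> carrier_mat z z" "snd Z \<in> carrier_mat z z"
    using w x_y_z_def by (auto simp: lwf_def)
  have d: "dim_row (fst X) = x" "dim_col (fst X) = x" "dim_row (snd X) = x" "dim_col (snd X) = x"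
    "dim_row (fst Y) = y" "dim_col (fst Y) = y" "dim_row (snd Y) = y" "dim_col (snd Y) = y"
    "dim_row (fst Z) = z" "dim_col (fst Z) = z" "dim_row (snd Z) = z" "dim_col (snd Z) = z"
    using c by auto
  have l: "ldim (lmod_tensor X Y) = x * y" "ldim (lmod_tensor Y Z) = y * z"
    using x_y_z_def by (simp_all add: ldim_tensor)
  have o: "1\<^sub>m x \<in> carrier_mat x x" "1\<^sub>m y \<in> carrier_mat y y" "1\<^sub>m z \<in> carrier_mat z z" "1\<^sub>m (y*z) \<in> carrier_mat (y*z) (y*z)" by auto
  note kc = kron_carrier[OF c(1) o(4)] kron_carrier[OF c(2) o(4)]
    kron_carrier[OF o(1) kron_carrier[OF c(3) o(3)]] kron_carrier[OF o(1) kron_carrier[OF o(2) c(5)]]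
    kron_carrier[OF c(1) kron_carrier[OF c(3) o(3)]] kron_carrier[OF o(1) kron_carrier[OF c(4) o(3)]]
    kron_carrier[OF c(1) kron_carrier[OF o(2) c(5)]] kron_carrier[OF o(1) kron_carrier[OF c(3) c(5)]]
    kron_carrier[OF o(1) kron_carrier[OF o(2) c(6)]]
  have o1: "(1\<^sub>m (x * y) :: bit mat) = kron (1\<^sub>m x) (1\<^sub>m y)" by (simp add: kron_one)
  have o2: "kron (1\<^sub>m y) (1\<^sub>m z) = (1\<^sub>m (y * z) :: bit mat)" by (simp add: kron_one)
  have f: "fst (lmod_tensor (lmod_tensor X Y) Z) = fst (lmod_tensor X (lmod_tensor Y Z))"
  proof -
    have "fst (lmod_tensor (lmod_tensor X Y) Z) =
       (kron (fst X) (1\<^sub>m (y*z)) + kron (1\<^sub>m x) (kron (fst Y) (1\<^sub>m z))) + kron (1\<^sub>m x) (kron (1\<^sub>m y) (fst Z))"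
      unfolding fst_tensor l x_y_z_def[symmetric] o1
      by (simp only: kron_add_left' kron_assoc o2 kron_dims index_add_mat(2,3) index_one_mat(2,3) d)
    also have "\<dots> = kron (fst X) (1\<^sub>m (y*z)) + (kron (1\<^sub>m x) (kron (fst Y) (1\<^sub>m z)) + kron (1\<^sub>m x) (kron (1\<^sub>m y) (fst Z)))"
      by (rule rearr3[OF kc(1) kc(3) kc(4)])
    also have "\<dots> = fst (lmod_tensor X (lmod_tensor Y Z))"
      unfolding fst_tensor l x_y_z_def[symmetric]
      by (simp only: kron_add_right' kron_dims index_add_mat(2,3) index_one_mat(2,3) d)
    finally show ?thesis .
  qed
  have s: "snd (lmod_tensor (lmod_tensor X Y) Z) = snd (lmod_tensor X (lmod_tensor Y Z))"
  proof -
    have "snd (lmod_tensor (lmod_tensor X Y) Z) =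
       ((kron (snd X) (1\<^sub>m (y*z)) + kron (fst X) (kron (fst Y) (1\<^sub>m z)) + kron (1\<^sub>m x) (kron (snd Y) (1\<^sub>m z)))
        + (kron (fst X) (kron (1\<^sub>m y) (fst Z)) + kron (1\<^sub>m x) (kron (fst Y) (fst Z))))
        + kron (1\<^sub>m x) (kron (1\<^sub>m y) (snd Z))"
      unfolding fst_tensor snd_tensor l x_y_z_def[symmetric] o1
      by (simp only: kron_add_left' kron_assoc o2 kron_dims index_add_mat(2,3) index_one_mat(2,3) d)
    also have "\<dots> = (kron (snd X) (1\<^sub>m (y*z)) + (kron (fst X) (kron (fst Y) (1\<^sub>m z)) + kron (fst X) (kron (1\<^sub>m y) (fst Z))))
        + ((kron (1\<^sub>m x) (kron (snd Y) (1\<^sub>m z)) + kron (1\<^sub>m x) (kron (fst Y) (fst Z))) + kron (1\<^sub>m x) (kron (1\<^sub>m y) (snd Z)))"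
      by (rule rearr6[OF kc(2) kc(5) kc(6) kc(7) kc(8) kc(9)])
    also have "\<dots> = snd (lmod_tensor X (lmod_tensor Y Z))"
      unfolding fst_tensor snd_tensor l x_y_z_def[symmetric]
      by (simp only: kron_add_right' kron_dims index_add_mat(2,3) index_one_mat(2,3) d)
    finally show ?thesis .
  qed
  show ?thesis using f s by (simp add: prod_eq_iff)
qed


definition LM :: "nat \<Rightarrow> bit list list \<Rightarrow> bit mat" where
  "LM n L = mat n n (\<lambda>(i,j). L ! i ! j)"

definition tab :: "nat \<Rightarrow> (nat \<Rightarrow> nat \<Rightarrow> bit) \<Rightarrow> bit list list" where
  "tab n f = map (\<lambda>i. map (\<lambda>j. f i j) [0..<n]) [0..<n]"

definition lmul :: "nat \<Rightarrow> bit list list \<Rightarrow> bit list list \<Rightarrow> bit list list" where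
  "lmul n L K = tab n (\<lambda>i j. sum_list (map (\<lambda>k. L!i!k * K!k!j) [0..<n]))"

lemma LM_dim[simp]: "dim_row (LM n L) = n" "dim_col (LM n L) = n" by (simp_all add: LM_def)

lemma LM_carrier: "LM n L \<in> carrier_mat n n" by (rule carrier_matI) simp_all

lemma mat_LM: "mat n n f = LM n (tab n (\<lambda>i j. f (i,j)))"
  by (rule eq_matI) (simp_all add: LM_def tab_def)

lemma LM_mult: "LM n L * LM n K = LM n (lmul n L K)"
proof (rule eq_matI)
  fix i j assume ij: "i < dim_row (LM n (lmul n L K))" "j < dim_col (LM n (lmul n L K))"
  then have ij': "i < n" "j < n" by simp_all
  have "(LM n L * LM n K) $$ (i,j) = (\<Sum>l\<in>{0..<n}. LM n L $$ (i,l) * LM n K $$ (l,j))"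
    by (rule mult_index[OF LM_carrier LM_carrier ij'])
  also have "\<dots> = (\<Sum>l\<in>{0..<n}. L!i!l * K!l!j)"
    by (rule sum.cong) (simp_all add: LM_def ij')
  also have "\<dots> = sum_list (map (\<lambda>k. L!i!k * K!k!j) [0..<n])"
    by (simp only: sum_set_upt_conv_sum_list_nat atLeastLessThan_upt)
  also have "\<dots> = LM n (lmul n L K) $$ (i,j)"
    using ij' by (simp add: LM_def lmul_def tab_def)
  finally show "(LM n L * LM n K) $$ (i,j) = LM n (lmul n L K) $$ (i,j)" .
qed simp_all

lemma LM_add: "LM n L + LM n K = LM n (tab n (\<lambda>i j. L!i!j + K!i!j))"
  by (rule eq_matI) (simp_all add: LM_def tab_def)

lemma kron_LM: "kron (LM a L) (LM b K) = LM (a*b) (tab (a*b) (\<lambda>i j. L!(i div b)!(j div b) * K!(i mod b)!(j mod b)))"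
proof (rule eq_matI)
  fix i j assume ij: "i < dim_row (LM (a*b) (tab (a*b) (\<lambda>i j. L!(i div b)!(j div b) * K!(i mod b)!(j mod b))))"
    "j < dim_col (LM (a*b) (tab (a*b) (\<lambda>i j. L!(i div b)!(j div b) * K!(i mod b)!(j mod b))))"
  then have ij': "i < a*b" "j < a*b" by simp_all
  have b0: "b > 0" using ij' by (auto intro: gr0I)
  have q: "i div b < a" "j div b < a" "i mod b < b" "j mod b < b" using ij' b0 by (simp_all add: less_mult_imp_div_less)
  have "kron (LM a L) (LM b K) $$ (i,j) = LM a L $$ (i div b, j div b) * LM b K $$ (i mod b, j mod b)"
    using kron_index[of i "LM a L" "LM b K" j] ij' by (simp only: LM_dim)
  also have "\<dots> = L!(i div b)!(j div b) * K!(i mod b)!(j mod b)"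
    using q by (simp only: LM_def index_mat(1) split)
  also have "\<dots> = LM (a*b) (tab (a*b) (\<lambda>i j. L!(i div b)!(j div b) * K!(i mod b)!(j mod b))) $$ (i,j)"
    using ij' by (simp only: LM_def index_mat(1) split tab_def nth_map length_upt nth_upt add_0 diff_zero)
  finally show "kron (LM a L) (LM b K) $$ (i,j) = LM (a*b) (tab (a*b) (\<lambda>i j. L!(i div b)!(j div b) * K!(i mod b)!(j mod b))) $$ (i,j)" .
qed simp_all

lemma dsum_LM: "mat_dsum (LM a L) (LM b K) = LM (a+b) (tab (a+b) (\<lambda>i j. if i < a then (if j < a then L!i!j else 0) else (if j < a then 0 else K!(i-a)!(j-a))))"
  by (rule eq_matI) (auto simp: dsum_index LM_def tab_def)

lemma one_LM: "(1\<^sub>m n :: bit mat) = LM n (tab n (\<lambda>i j. if i = j then 1 else 0))"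
  by (rule eq_matI) (simp_all add: LM_def tab_def)

lemma zero_LM: "(0\<^sub>m n n :: bit mat) = LM n (tab n (\<lambda>i j. 0))"
  by (rule eq_matI) (simp_all add: LM_def tab_def)

lemma iso_LM:
  assumes "n = m" "lmul n S T = tab n (\<lambda>i j. if i = j then 1 else 0)" "lmul n T S = tab n (\<lambda>i j. if i = j then 1 else 0)"
    "lmul n S A = lmul n C S" "lmul n S B = lmul n D S"
  shows "lmod_iso (LM n A, LM n B) (LM m C, LM m D)"
proof (rule iso_intro[where S="LM n S" and T="LM n T" and n=n])
  show "lwf (LM n A, LM n B)" "lwf (LM m C, LM m D)" using assms(1) by (simp_all add: lwf_def ldim_def LM_carrier)
qed (use assms in \<open>simp_all add: ldim_def LM_carrier LM_mult one_LM\<close>)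

lemma pair_LM_Lam: "Lam = (LM 4 (tab 4 (\<lambda>i j. if (i, j) = (1, 0) \<or> (i, j) = (3, 2) then 1 else 0)),
                          LM 4 (tab 4 (\<lambda>i j. if (i, j) = (2, 0) \<or> (i, j) = (3, 1) then 1 else 0)))"
  unfolding Lam_def mat_LM by simp

lemma pair_LM_Q: "LamQ1 = (LM 2 (tab 2 (\<lambda>i j. if (i, j) = (1, 0) then 1 else 0)), LM 2 (tab 2 (\<lambda>i j. 0)))"
  unfolding LamQ1_def mat_LM zero_LM by simp

lemma pair_LM_M: "Mi k = (LM 2 (tab 2 (\<lambda>i j. if (i, j) = (0, 1) then 1 else 0)), LM 2 (tab 2 (\<lambda>i j. 0)))"
  unfolding Mi_def mat_LM zero_LM by simp

lemma pair_LM_zero: "lmod_zero = (LM 0 (tab 0 (\<lambda>i j. 0)), LM 0 (tab 0 (\<lambda>i j. 0)))"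
  unfolding lmod_zero_def zero_LM by simp

lemmas LM_rules = lmod_tensor_def Let_def ldim_def fst_conv snd_conv lmod_sum_def LM_dim one_LM kron_LM LM_add dsum_LM

lemma C0: "lmod_iso (Mi 0) LamQ1"
  unfolding pair_LM_M pair_LM_Q
  by (rule iso_LM[where S="[[0,1],[1,0]]" and T="[[0,1],[1,0]]"]) code_simp+


lemma C1: "lmod_iso (lmod_tensor Lam (Mi 0)) (lmod_copies 2 Lam)"
  unfolding numeral_2_eq_2 lmod_copies.simps pair_LM_Lam pair_LM_M pair_LM_zero
  apply (simp only: LM_rules)
  by (rule iso_LM[where S="[[0,1,0,0,0,0,0,0],[1,0,0,0,0,0,0,0],[0,0,0,0,0,1,0,0],[0,0,0,0,1,0,0,0],[1,0,0,1,0,0,0,0],[0,0,1,0,0,1,0,0],[0,0,0,0,1,0,0,1],[0,0,0,0,0,0,1,0]]" and T="[[0,1,0,0,0,0,0,0],[1,0,0,0,0,0,0,0],[0,0,1,0,0,1,0,0],[0,1,0,0,1,0,0,0],[0,0,0,1,0,0,0,0],[0,0,1,0,0,0,0,0],[0,0,0,0,0,0,0,1],[0,0,0,1,0,0,1,0]]"]) code_simp+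

lemma C2: "lmod_iso (lmod_tensor LamQ1 (Mi 0)) (lmod_tensor (Mi 0) (Mi 0))"
  unfolding pair_LM_Q pair_LM_M
  apply (simp only: LM_rules)
  by (rule iso_LM[where S="[[0,0,1,0],[1,0,0,0],[0,0,0,1],[0,1,0,0]]" and T="[[0,1,0,0],[0,0,0,1],[1,0,0,0],[0,0,1,0]]"]) code_simp+

lemma C3: "lmod_iso (lmod_tensor (lmod_tensor (Mi 0) (Mi 0)) (Mi 0)) (lmod_sum Lam (lmod_copies 2 LamQ1))"
  unfolding numeral_2_eq_2 lmod_copies.simps pair_LM_Lam pair_LM_Q pair_LM_M pair_LM_zero
  apply (simp only: LM_rules)
  by (rule iso_LM[where S="[[0,0,0,0,0,0,0,1],[0,0,0,1,0,1,1,0],[0,1,1,0,1,0,0,1],[1,0,0,0,0,0,1,1],[0,0,0,0,0,1,1,0],[0,1,1,0,0,0,0,1],[0,0,0,1,0,1,0,0],[0,0,1,0,1,0,0,1]]" and T="[[1,1,0,1,0,0,1,0],[0,0,1,0,0,0,0,1],[1,0,1,0,0,1,0,1],[0,1,0,0,1,0,0,0],[0,0,1,0,0,1,0,0],[0,1,0,0,1,0,1,0],[0,1,0,0,0,0,1,0],[1,0,0,0,0,0,0,0]]"]) code_simp+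


definition eqv :: "lmod \<Rightarrow> lmod \<Rightarrow> bool" where
  "eqv M N \<longleftrightarrow> lwf M \<and> lwf N \<and> lmod_iso M N"

lemma eqv_wf: "eqv M N \<Longrightarrow> lwf M" "eqv M N \<Longrightarrow> lwf N" by (simp_all add: eqv_def)

lemma eqv_refl: "lwf M \<Longrightarrow> eqv M M" by (simp add: eqv_def iso_refl)
lemma eqv_eq: "lwf M \<Longrightarrow> M = N \<Longrightarrow> eqv M N" by (simp add: eqv_def iso_refl)
lemma eqv_sym: "eqv M N \<Longrightarrow> eqv N M" by (auto simp: eqv_def intro: iso_sym)
lemma eqv_trans[trans]: "eqv M N \<Longrightarrow> eqv N K \<Longrightarrow> eqv M K" by (auto simp: eqv_def intro: iso_trans)
lemma eqv_sum: "eqv A A' \<Longrightarrow> eqv B B' \<Longrightarrow> eqv (lmod_sum A B) (lmod_sum A' B')"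
  by (auto simp: eqv_def wf_sum intro: iso_sum_cong)
lemma eqv_comm: "lwf A \<Longrightarrow> lwf B \<Longrightarrow> eqv (lmod_sum A B) (lmod_sum B A)"
  by (auto simp: eqv_def wf_sum intro: iso_sum_comm)
lemma eqv_tensor: "eqv A A' \<Longrightarrow> lwf X \<Longrightarrow> eqv (lmod_tensor A X) (lmod_tensor A' X)"
  by (auto simp: eqv_def wf_tensor intro: tensor_iso_left)

definition M0 :: lmod where "M0 = Mi 0"
definition M2 :: lmod where "M2 = lmod_tensor M0 M0"

lemma wf_Lam: "lwf Lam" by (simp add: pair_LM_Lam lwf_def ldim_def LM_carrier)
lemma wf_Q: "lwf LamQ1" by (simp add: pair_LM_Q lwf_def ldim_def LM_carrier)
lemma wf_M0: "lwf M0" by (simp add: M0_def pair_LM_M lwf_def ldim_def LM_carrier)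
lemma wf_M2: "lwf M2" by (simp add: M2_def wf_tensor wf_M0)

lemmas wfs = wf_Lam wf_Q wf_M0 wf_M2 wf_copies wf_sum wf_tensor wf_zero(1) unit_facts(4)

lemma E0: "eqv M0 LamQ1" using C0 by (simp add: eqv_def M0_def wfs[unfolded M0_def])
lemma E1: "eqv (lmod_tensor Lam M0) (lmod_copies 2 Lam)" using C1 by (simp add: eqv_def M0_def wfs[unfolded M0_def])
lemma E2: "eqv (lmod_tensor LamQ1 M0) M2" using C2 by (simp add: eqv_def M0_def M2_def wfs[unfolded M0_def])
lemma E3: "eqv (lmod_tensor M2 M0) (lmod_sum Lam (lmod_copies 2 LamQ1))"
  using C3 by (simp add: eqv_def M0_def M2_def wfs[unfolded M0_def M2_def])

primrec pw :: "nat \<Rightarrow> lmod" where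
  "pw 0 = lmod_unit"
| "pw (Suc k) = lmod_tensor M0 (pw k)"

lemma wf_pw: "lwf (pw k)" by (induction k) (simp_all add: wfs)

lemma pw_Suc': "pw (Suc k) = lmod_tensor (pw k) M0"
proof (induction k)
  case 0 then show ?case by (simp add: tensor_unit_right tensor_unit_left wfs)
next
  case (Suc k)
  have "pw (Suc (Suc k)) = lmod_tensor M0 (lmod_tensor (pw k) M0)" using Suc by simp
  also have "\<dots> = lmod_tensor (lmod_tensor M0 (pw k)) M0" by (rule tensor_assoc[symmetric]) (simp_all add: wfs wf_pw)
  finally show ?case by simp
qed

lemma foldr_pw: "foldr (\<lambda>j N. lmod_tensor (Mi j) N) xs lmod_unit = pw (length xs)"
  by (induction xs) (simp_all add: M0_def Mi_def)

lemma MJ_pw: "finite J \<Longrightarrow> MJ J = pw (card J)"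
  by (simp add: MJ_def foldr_pw)

lemma copies_tensor: "lwf X \<Longrightarrow> lwf Y \<Longrightarrow> lmod_tensor (lmod_copies k X) Y = lmod_copies k (lmod_tensor X Y)"
  by (induction k) (simp_all add: tensor_zero_left tensor_sum_left wfs)

lemma copies_eqv: "eqv X Y \<Longrightarrow> eqv (lmod_copies k X) (lmod_copies k Y)"
  by (induction k) (simp_all add: eqv_sum eqv_refl wfs)

lemma copies_add: "lwf X \<Longrightarrow> lmod_copies (a + b) X = lmod_sum (lmod_copies a X) (lmod_copies b X)"
  by (induction a) (simp_all add: sum_zero_left sum_assoc wfs)

lemma copies_mult: "lwf X \<Longrightarrow> lmod_copies a (lmod_copies b X) = lmod_copies (a * b) X"
  by (induction a) (simp_all add: copies_add wfs)

lemma eqv_assoc: "lwf A \<Longrightarrow> lwf B \<Longrightarrow> lwf C \<Longrightarrow> eqv (lmod_sum (lmod_sum A B) C) (lmod_sum A (lmod_sum B C))"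
  by (rule eqv_eq) (simp_all add: sum_assoc wfs)

lemma copies_sum: assumes "lwf X" "lwf Y"
  shows "eqv (lmod_copies k (lmod_sum X Y)) (lmod_sum (lmod_copies k X) (lmod_copies k Y))"
proof (induction k)
  case 0 then show ?case using assms by (simp add: eqv_eq sum_zero_left wfs)
next
  case (Suc k)
  let ?cX = "lmod_copies k X" and ?cY = "lmod_copies k Y"
  have w: "lwf ?cX" "lwf ?cY" using assms by (simp_all add: wfs)
  have "eqv (lmod_copies (Suc k) (lmod_sum X Y)) (lmod_sum (lmod_sum X Y) (lmod_sum ?cX ?cY))"
    using Suc assms by (simp add: eqv_sum eqv_refl wfs)
  also have "lmod_sum (lmod_sum X Y) (lmod_sum ?cX ?cY) = lmod_sum X (lmod_sum (lmod_sum Y ?cX) ?cY)"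
    using assms w by (simp add: sum_assoc wfs)
  also have "eqv \<dots> (lmod_sum X (lmod_sum (lmod_sum ?cX Y) ?cY))"
    using assms w by (intro eqv_sum eqv_refl eqv_comm) (simp_all add: wfs)
  also have "lmod_sum X (lmod_sum (lmod_sum ?cX Y) ?cY) = lmod_sum (lmod_copies (Suc k) X) (lmod_copies (Suc k) Y)"
    using assms w by (simp add: sum_assoc wfs)
  finally show ?case .
qed


lemma free0: "free_lmod 0 = lmod_zero" by (simp add: free_lmod_def)
lemma wf_free: "lwf (free_lmod a)" by (simp add: free_lmod_def wfs)

lemma step_OE:
  assumes "eqv (pw (2*t+1)) (lmod_sum (free_lmod a) (lmod_copies (2^t) LamQ1))"
  shows "eqv (pw (2*t+2)) (lmod_sum (free_lmod (a*2)) (lmod_copies (2^t) M2))"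
proof -
  have "pw (2*t+2) = lmod_tensor (pw (2*t+1)) M0" using pw_Suc'[of "2*t+1"] by simp
  also have "eqv \<dots> (lmod_tensor (lmod_sum (free_lmod a) (lmod_copies (2^t) LamQ1)) M0)"
    by (rule eqv_tensor[OF assms]) (simp add: wfs)
  also have "lmod_tensor (lmod_sum (free_lmod a) (lmod_copies (2^t) LamQ1)) M0
      = lmod_sum (lmod_copies a (lmod_tensor Lam M0)) (lmod_copies (2^t) (lmod_tensor LamQ1 M0))"
    by (simp add: tensor_sum_left copies_tensor free_lmod_def wfs)
  also have "eqv \<dots> (lmod_sum (lmod_copies a (lmod_copies 2 Lam)) (lmod_copies (2^t) M2))"
    by (intro eqv_sum copies_eqv E1 E2)
  also have "lmod_sum (lmod_copies a (lmod_copies 2 Lam)) (lmod_copies (2^t) M2) = lmod_sum (free_lmod (a*2)) (lmod_copies (2^t) M2)"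
    by (simp add: copies_mult free_lmod_def wfs)
  finally show ?thesis .
qed

lemma step_EO:
  assumes "eqv (pw (2*t+2)) (lmod_sum (free_lmod a) (lmod_copies (2^t) M2))"
  shows "eqv (pw (2*(Suc t)+1)) (lmod_sum (free_lmod (a*2 + 2^t)) (lmod_copies (2^(Suc t)) LamQ1))"
proof -
  have "pw (2*(Suc t)+1) = lmod_tensor (pw (2*t+2)) M0" using pw_Suc'[of "2*t+2"] by simp
  also have "eqv \<dots> (lmod_tensor (lmod_sum (free_lmod a) (lmod_copies (2^t) M2)) M0)"
    by (rule eqv_tensor[OF assms]) (simp add: wfs)
  also have "lmod_tensor (lmod_sum (free_lmod a) (lmod_copies (2^t) M2)) M0
      = lmod_sum (lmod_copies a (lmod_tensor Lam M0)) (lmod_copies (2^t) (lmod_tensor M2 M0))"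
    by (simp add: tensor_sum_left copies_tensor free_lmod_def wfs)
  also have "eqv \<dots> (lmod_sum (lmod_copies a (lmod_copies 2 Lam)) (lmod_copies (2^t) (lmod_sum Lam (lmod_copies 2 LamQ1))))"
    by (intro eqv_sum copies_eqv E1 E3)
  also have "eqv \<dots> (lmod_sum (lmod_copies a (lmod_copies 2 Lam)) (lmod_sum (lmod_copies (2^t) Lam) (lmod_copies (2^t) (lmod_copies 2 LamQ1))))"
    by (intro eqv_sum eqv_refl copies_sum) (simp_all add: wfs)
  also have "lmod_sum (lmod_copies a (lmod_copies 2 Lam)) (lmod_sum (lmod_copies (2^t) Lam) (lmod_copies (2^t) (lmod_copies 2 LamQ1)))
     = lmod_sum (lmod_sum (lmod_copies (a*2) Lam) (lmod_copies (2^t) Lam)) (lmod_copies (2^t*2) LamQ1)"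
    by (simp add: copies_mult sum_assoc wfs)
  also have "\<dots> = lmod_sum (free_lmod (a*2 + 2^t)) (lmod_copies (2^(Suc t)) LamQ1)"
    by (simp add: copies_add free_lmod_def wfs mult.commute)
  finally show ?thesis .
qed

lemma pw_struct:
  "(\<exists>a. eqv (pw (2*t+1)) (lmod_sum (free_lmod a) (lmod_copies (2^t) LamQ1)))
   \<and> (\<exists>a. eqv (pw (2*t+2)) (lmod_sum (free_lmod a) (lmod_copies (2^t) M2)))"
proof (induction t)
  case 0
  have o: "\<exists>a. eqv (pw (2*0+1)) (lmod_sum (free_lmod a) (lmod_copies (2^0) LamQ1))"
  proof (intro exI)
    have "pw (2*0+1) = M0" by (simp add: tensor_unit_right wfs)
    also have "eqv M0 LamQ1" by (rule E0)
    also have "LamQ1 = lmod_sum (free_lmod 0) (lmod_copies (2^0) LamQ1)"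
      by (simp add: free0 sum_zero_left sum_zero_right wfs)
    finally show "eqv (pw (2*0+1)) (lmod_sum (free_lmod 0) (lmod_copies (2^0) LamQ1))" .
  qed
  then show ?case using step_OE by blast
next
  case (Suc t)
  then obtain a where "eqv (pw (2*t+2)) (lmod_sum (free_lmod a) (lmod_copies (2^t) M2))" by blast
  then have o: "eqv (pw (2*(Suc t)+1)) (lmod_sum (free_lmod (a*2 + 2^t)) (lmod_copies (2^(Suc t)) LamQ1))"
    by (rule step_EO)
  then show ?case using step_OE[OF o] by blast
qed

theorem mainTheorem8:
  fixes J :: "nat set" and n :: nat
  assumes "finite J" and "0 \<notin> J" and "card J = n" and "n \<ge> 1"
  shows "(\<forall>t. n = 2 * t + 1 \<longrightarrow> stably_iso (MJ J) (lmod_copies (2 ^ t) LamQ1))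
       \<and> (\<forall>t. n = 2 * t \<longrightarrow> stably_iso (MJ J) (lmod_copies (2 ^ (t - 1)) (MJ {1, 2})))"
proof -
  have MJ: "MJ J = pw n" using assms MJ_pw by simp
  have st: "stably_iso X Y" if "eqv X (lmod_sum (free_lmod a) Y)" for X Y a
  proof -
    have "lmod_sum (free_lmod 0) X = X" using that by (simp add: free0 sum_zero_left eqv_wf)
    then show ?thesis unfolding stably_iso_def using that by (metis eqv_def)
  qed
  have M12: "MJ {1, 2} = M2"
  proof -
    have c2: "card {1, 2::nat} = 2" by simp
    have "MJ {1, 2} = pw 2" using MJ_pw[of "{1,2::nat}"] unfolding c2 by simp
    also have "\<dots> = M2" by (simp add: numeral_2_eq_2 M2_def tensor_unit_right wfs)
    finally show ?thesis .
  qed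
  show ?thesis
  proof (intro conjI allI impI)
    fix t assume n1: "n = 2 * t + 1"
    obtain a where h: "eqv (pw (2*t+1)) (lmod_sum (free_lmod a) (lmod_copies (2^t) LamQ1))"
      using pw_struct[of t] by blast
    show "stably_iso (MJ J) (lmod_copies (2 ^ t) LamQ1)"
      unfolding MJ n1 by (rule st[OF h])
  next
    fix t assume n: "n = 2 * t"
    then obtain s where s: "t = Suc s" using assms(4) by (cases t) auto
    have n2: "n = 2 * s + 2" using n s by simp
    have t1: "t - 1 = s" using s by simp
    obtain a where h: "eqv (pw (2*s+2)) (lmod_sum (free_lmod a) (lmod_copies (2^s) M2))"
      using pw_struct[of s] by blast
    show "stably_iso (MJ J) (lmod_copies (2 ^ (t - 1)) (MJ {1, 2}))"
      unfolding MJ n2 t1 M12 by (rule st[OF h])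
  qed
qed


end
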